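(* Let $a,b,c,p,\lambda,n$ be real constants with $3a=pb$, $c\lambda=0$ and $(1+p/3)\lambda=2-n$, and set $\tilde\lambda=1-\frac{n+\lambda}{2}$ and $$\tilde L=\tfrac12(ru_r-\lambda u)u_t^2-\tfrac16(ru_r-3\lambda u)(c+bu^p)u_r^2 .$$ Then, identically (for every smooth positive function $u(t,r)$, $r>0$), $$r^{n-1}(ru_r-\lambda u)\Big(u_{tt}-(c+bu^p)\big(u_{rr}+\tfrac{n-1}{r}u_r\big)-\tfrac{pb}{3}u^{p-1}u_r^2\Big)=-E_u\big(r^{n-1}\tilde L\big)-(rD_r+\tilde\lambda)\big(r^{n-1}u_t^2\big),$$ where $E_u=\partial_u-D_r\partial_{u_r}-D_t\partial_{u_t}$ is the Euler–Lagrange operator. Moreover, if in addition $c=0$, $p=6(1-3/n)$ and $\lambda=-n/3$, then multiplying this identity by $u_t$ yields a conservation law $D_tT+D_rX=0$ of equation (A) with $a=pb/3$, whose multiplier is $r^{n-1}u_t(ru_r+\tfrac n3u)$.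
   Context: Equation (A) with $a=pb/3$ is $u_{tt}=(c+bu^{p})\big(u_{rr}+\frac{n-1}{r}u_{r}\big)+\tfrac{pb}{3}u^{p-1}u_{r}^{2}$. $D_t,D_r$ denote total derivatives. *)

theory Defs
  imports "HOL-Analysis.Analysis"
begin

definition pt :: "(real \<Rightarrow> real \<Rightarrow> real) \<Rightarrow> real \<Rightarrow> real \<Rightarrow> real" where
  "pt u t r = deriv (\<lambda>s. u s r) t"

definition pr :: "(real \<Rightarrow> real \<Rightarrow> real) \<Rightarrow> real \<Rightarrow> real \<Rightarrow> real" where
  "pr u t r = deriv (\<lambda>s. u t s) r"

fun Ck :: "nat \<Rightarrow> (real \<times> real) set \<Rightarrow> (real \<Rightarrow> real \<Rightarrow> real) \<Rightarrow> bool" where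
  "Ck 0 S u = continuous_on S (case_prod u)"
| "Ck (Suc k) S u = ((\<forall>z\<in>S. case_prod u differentiable (at z))
                      \<and> Ck k S (pt u) \<and> Ck k S (pr u))"

definition smooth_on :: "(real \<times> real) set \<Rightarrow> (real \<Rightarrow> real \<Rightarrow> real) \<Rightarrow> bool" where
  "smooth_on S u \<longleftrightarrow> (\<forall>k. Ck k S u)"

text \<open>Euler--Lagrange operator E_u = d_u - D_r d_{u_r} - D_t d_{u_t} applied to a
  Lagrangian F(r,u,u_r,u_t), evaluated along u at (t,r).\<close>

definition EL :: "(real \<Rightarrow> real \<Rightarrow> real \<Rightarrow> real \<Rightarrow> real) \<Rightarrow> (real \<Rightarrow> real \<Rightarrow> real)
                   \<Rightarrow> real \<Rightarrow> real \<Rightarrow> real" where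
  "EL F u t r =
     deriv (\<lambda>V. F r V (pr u t r) (pt u t r)) (u t r)
   - deriv (\<lambda>s. deriv (\<lambda>W. F s (u t s) W (pt u t s)) (pr u t s)) r
   - deriv (\<lambda>s. deriv (\<lambda>W. F r (u s r) (pr u s r) W) (pt u s r)) t"

definition Lag :: "real \<Rightarrow> real \<Rightarrow> real \<Rightarrow> real \<Rightarrow> real \<Rightarrow> real
                    \<Rightarrow> real \<Rightarrow> real \<Rightarrow> real \<Rightarrow> real" where
  "Lag b c p lam n r U Ur Ut =
     r powr (n - 1) * ((1/2) * (r * Ur - lam * U) * Ut^2
                       - (1/6) * (r * Ur - 3 * lam * U) * (c + b * U powr p) * Ur^2)"

text \<open>Residual of equation (A) with a = p b / 3.\<close>

definition resA :: "real \<Rightarrow> real \<Rightarrow> real \<Rightarrow> real \<Rightarrow> (real \<Rightarrow> real \<Rightarrow> real) \<Rightarrow> real \<Rightarrow> real \<Rightarrow> real" where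
  "resA b c p n u t r =
     pt (pt u) t r - (c + b * u t r powr p) * (pr (pr u) t r + (n - 1) / r * pr u t r)
     - (p * b / 3) * u t r powr (p - 1) * (pr u t r)^2"

end

theory Submission
  imports Defs
begin


lemma partial_t:
  assumes "case_prod f differentiable (at (s,y))"
  shows "((\<lambda>s. f s y) has_real_derivative pt f s y) (at s)"
proof -
  have "((\<lambda>s. (s,y)) has_derivative (\<lambda>h. (h,0))) (at s)"
    by (auto intro!: derivative_eq_intros)
  then have "(\<lambda>s. (s,y)) differentiable (at s)" by (rule differentiableI)
  then have "(case_prod f \<circ> (\<lambda>s. (s,y))) differentiable (at s)"
    using differentiable_chain_at assms by fastforce
  then have "(\<lambda>s. f s y) differentiable (at s)" by (simp add: o_def)
  then show ?thesis by (simp add: pt_def DERIV_deriv_iff_real_differentiable)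
qed

lemma partial_r:
  assumes "case_prod f differentiable (at (x,s))"
  shows "((\<lambda>s. f x s) has_real_derivative pr f x s) (at s)"
proof -
  have "((\<lambda>s. (x,s)) has_derivative (\<lambda>h. (0,h))) (at s)"
    by (auto intro!: derivative_eq_intros)
  then have "(\<lambda>s. (x,s)) differentiable (at s)" by (rule differentiableI)
  then have "(case_prod f \<circ> (\<lambda>s. (x,s))) differentiable (at s)"
    using differentiable_chain_at assms by fastforce
  then have "(\<lambda>s. f x s) differentiable (at s)" by (simp add: o_def)
  then show ?thesis by (simp add: pr_def DERIV_deriv_iff_real_differentiable)
qed

lemma smooth_pt: "smooth_on S u \<Longrightarrow> smooth_on S (pt u)"
  unfolding smooth_on_def by (metis Ck.simps(2))
lemma smooth_pr: "smooth_on S u \<Longrightarrow> smooth_on S (pr u)"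
  unfolding smooth_on_def by (metis Ck.simps(2))
lemma smooth_diff: "smooth_on S u \<Longrightarrow> z \<in> S \<Longrightarrow> case_prod u differentiable (at z)"
  unfolding smooth_on_def by (metis Ck.simps(2))
lemma smooth_cont: "smooth_on S u \<Longrightarrow> continuous_on S (case_prod u)"
  unfolding smooth_on_def by (metis Ck.simps(1))

lemma clairaut:
  assumes sm: "smooth_on (UNIV \<times> {0<..}) u" and r: "r > 0"
  shows "pr (pt u) t r = pt (pr u) t r"
proof (rule ccontr)
  define S where "S = (UNIV :: real set) \<times> {0::real<..}"
  have oS: "open S" unfolding S_def by (intro open_Times) auto
  have inS: "\<And>a b. b > 0 \<Longrightarrow> (a,b) \<in> S" unfolding S_def by auto
  define A where "A = pr (pt u) t r"
  define B where "B = pt (pr u) t r"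
  assume "pr (pt u) t r \<noteq> pt (pr u) t r"
  then have AB: "A \<noteq> B" by (simp add: A_def B_def)
  define e where "e = \<bar>A - B\<bar> / 2"
  have e: "e > 0" using AB by (simp add: e_def)
  have smS: "smooth_on S u" using sm by (simp add: S_def)
  have c1: "isCont (case_prod (pr (pt u))) (t,r)"
    using smooth_cont[OF smooth_pr[OF smooth_pt[OF smS]]] oS inS[OF r]
    by (simp add: continuous_on_eq_continuous_at)
  have c2: "isCont (case_prod (pt (pr u))) (t,r)"
    using smooth_cont[OF smooth_pt[OF smooth_pr[OF smS]]] oS inS[OF r]
    by (simp add: continuous_on_eq_continuous_at)
  obtain d1 where d1: "d1 > 0" "\<And>z. dist z (t,r) < d1 \<Longrightarrow> dist (case_prod (pr (pt u)) z) A < e"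
    using c1 e unfolding continuous_at_eps_delta A_def by fastforce
  obtain d2 where d2: "d2 > 0" "\<And>z. dist z (t,r) < d2 \<Longrightarrow> dist (case_prod (pt (pr u)) z) B < e"
    using c2 e unfolding continuous_at_eps_delta B_def by fastforce
  define h where "h = min d1 d2 / 2"
  have h: "h > 0" using d1 d2 by (simp add: h_def)
  have close: "dist (x,y) (t,r) < min d1 d2" if "t < x" "x < t + h" "r < y" "y < r + h" for x y
  proof -
    have "dist (x,y) (t,r) = sqrt ((x-t)^2 + (y-r)^2)"
      by (simp add: dist_Pair_Pair dist_real_def power2_abs)
    also have "\<dots> < sqrt ((min d1 d2)^2)"
    proof (rule real_sqrt_less_mono)
      have "(x-t)^2 < h^2" "(y-r)^2 < h^2" using that h
        by (auto intro!: power_strict_mono)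
      moreover have "h^2 = (min d1 d2)^2/4" by (simp add: h_def power_divide)
      moreover have "(min d1 d2)^2 \<ge> 0" by simp
      ultimately show "(x-t)^2 + (y-r)^2 < (min d1 d2)^2" by linarith
    qed
    also have "\<dots> = min d1 d2" using d1 d2 by simp
    finally show ?thesis .
  qed
  define Delta where "Delta = u (t+h) (r+h) - u (t+h) r - u t (r+h) + u t r"
  have dx1: "\<And>s. t \<le> s \<Longrightarrow> s \<le> t+h \<Longrightarrow> ((\<lambda>s. u s (r+h) - u s r) has_real_derivative (pt u s (r+h) - pt u s r)) (at s)"
    by (intro DERIV_diff partial_t smooth_diff[OF smS] inS) (use r h in auto)
  obtain x1 where x1: "t < x1" "x1 < t + h"
    "(\<lambda>s. u s (r+h) - u s r) (t+h) - (\<lambda>s. u s (r+h) - u s r) t = (t + h - t) * (pt u x1 (r+h) - pt u x1 r)"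
    using MVT2[of t "t+h", OF _ dx1] h by auto
  have dy1: "\<And>s. r \<le> s \<Longrightarrow> s \<le> r+h \<Longrightarrow> ((\<lambda>s. pt u x1 s) has_real_derivative pr (pt u) x1 s) (at s)"
    by (intro partial_r smooth_diff[OF smooth_pt[OF smS]] inS) (use r in auto)
  obtain y1 where y1: "r < y1" "y1 < r + h"
    "pt u x1 (r+h) - pt u x1 r = (r + h - r) * pr (pt u) x1 y1"
    using MVT2[of r "r+h", OF _ dy1] h by auto
  have D1: "Delta = h^2 * pr (pt u) x1 y1"
    using x1(3) y1(3) by (simp add: Delta_def power2_eq_square algebra_simps)
  have dy2: "\<And>s. r \<le> s \<Longrightarrow> s \<le> r+h \<Longrightarrow> ((\<lambda>s. u (t+h) s - u t s) has_real_derivative (pr u (t+h) s - pr u t s)) (at s)"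
    by (intro DERIV_diff partial_r smooth_diff[OF smS] inS) (use r in auto)
  obtain y2 where y2: "r < y2" "y2 < r + h"
    "(\<lambda>s. u (t+h) s - u t s) (r+h) - (\<lambda>s. u (t+h) s - u t s) r = (r + h - r) * (pr u (t+h) y2 - pr u t y2)"
    using MVT2[of r "r+h", OF _ dy2] h by auto
  have y2p: "y2 > 0" using y2 r by simp
  have dx2: "\<And>s. t \<le> s \<Longrightarrow> s \<le> t+h \<Longrightarrow> ((\<lambda>s. pr u s y2) has_real_derivative pt (pr u) s y2) (at s)"
    by (intro partial_t smooth_diff[OF smooth_pr[OF smS]] inS) (use y2p in auto)
  obtain x2 where x2: "t < x2" "x2 < t + h"
    "pr u (t+h) y2 - pr u t y2 = (t + h - t) * pt (pr u) x2 y2"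
    using MVT2[of t "t+h", OF _ dx2] h by auto
  have D2: "Delta = h^2 * pt (pr u) x2 y2"
    using y2(3) x2(3) by (simp add: Delta_def power2_eq_square algebra_simps)
  have eq: "pr (pt u) x1 y1 = pt (pr u) x2 y2" using D1 D2 h by simp
  have "dist (pr (pt u) x1 y1) A < e" using d1(2)[OF order_less_le_trans[OF close[OF x1(1,2) y1(1,2)]]] by simp
  moreover have "dist (pt (pr u) x2 y2) B < e" using d2(2)[OF order_less_le_trans[OF close[OF x2(1,2) y2(1,2)]]] by simp
  ultimately have "\<bar>A - B\<bar> < 2 * e" using eq by (simp add: dist_real_def)
  then show False by (simp add: e_def)
qed



lemma alg1:
  fixes R P r U Ur Ut Urr Urt Utt b c p lam n Rd Pu :: real
  assumes r: "r > 0" and U: "U > 0" and cl: "c*lam = 0" and nl: "(1+p/3)*lam = 2-n"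
    and Rd: "Rd = (n-1)*(R/r)" and Pu: "Pu = p*(P/U)"
  shows "R*(r*Ur - lam*U)*(Utt - (c + b*P)*(Urr + (n-1)/r*Ur) - (p*b/3)*(P/U)*Ur^2)
   = -( R*(-(lam/2)*Ut^2+(lam/2)*(c+b*P)*Ur^2-(1/6)*(r*Ur-3*lam*U)*(b*Pu)*Ur^2)
       - (Rd*((1/2)*r*Ut^2-(1/6)*r*(c+b*P)*Ur^2-(1/3)*(r*Ur-3*lam*U)*(c+b*P)*Ur)
          + R*((1/2)*Ut^2+r*Ut*Urt-(1/6)*((c+b*P)*Ur^2+r*(b*(Pu*Ur))*Ur^2+2*r*(c+b*P)*Ur*Urr)
               -(1/3)*((Ur+r*Urr-3*lam*Ur)*(c+b*P)*Ur+(r*Ur-3*lam*U)*(b*(Pu*Ur))*Ur+(r*Ur-3*lam*U)*(c+b*P)*Urr)))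
       - R*((r*Urt-lam*Ut)*Ut+(r*Ur-lam*U)*Utt))
     - (r*(Rd*Ut^2+R*(2*Ut*Urt)) + (1-(n+lam)/2)*(R*Ut^2))"
proof -
  have n: "n = 2 - (1+p/3)*lam" using nl by simp
  have cl': "c*lam*X = 0" for X using cl by simp
  have cz: "c = 0 \<or> lam = 0" using cl by simp
  show ?thesis using r U unfolding Rd Pu unfolding n
    apply (simp add: field_simps)
    apply (simp add: algebra_simps cl' power2_eq_square)
    using cz by blast
qed

lemma alg2:
  fixes R P r U Ur Ut Urr Urt Utt b p n Rd Pu :: real
  assumes r: "r > 0" and U: "U > 0" and n0: "n \<noteq> 0" and pn: "p = 6*(1-3/n)"
    and Rd: "Rd = (n-1)*(R/r)" and Pu: "Pu = p*(P/U)"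
  shows "R*((r*Urt+n/3*Ut)*Ut^2/2+(r*Ur+n/3*U)*(2*Ut*Utt)/2+b*(Pu*Ut)*(r*Ur^3/6+n/3*U*Ur^2/2)+b*P*(r*3*Ur^2*Urt/6+n/3*(Ut*Ur^2+U*2*Ur*Urt)/2))
   + (-(Rd*b*P*Ut*(r*Ur^2/2+n/3*U*Ur)+R*b*(Pu*Ur)*Ut*(r*Ur^2/2+n/3*U*Ur)+R*b*P*Urt*(r*Ur^2/2+n/3*U*Ur)
        +R*b*P*Ut*(Ur^2/2+r*2*Ur*Urr/2+n/3*(Ur*Ur+U*Urr)))
      -(R*Ut^3/6+r*Rd*Ut^3/6+r*R*3*Ut^2*Urt/6))
   = R*Ut*(r*Ur+n/3*U)*(Utt-(0+b*P)*(Urr+(n-1)/r*Ur)-(p*b/3)*(P/U)*Ur^2)"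
  using r U n0 unfolding Rd Pu pn
  by (simp add: field_simps) (simp add: algebra_simps power2_eq_square power3_eq_cube)



lemma lagU_gen:
  assumes g: "\<pi> V = P" and d: "(\<pi> has_real_derivative Pu) (at V)"
  shows "((\<lambda>V. R * ((1/2)*(r*W - lam*V)*Z^2 - (1/6)*(r*W - 3*lam*V)*(c + b*\<pi> V)*W^2)) has_real_derivative
     R*(-(lam/2)*Z^2+(lam/2)*(c+b*P)*W^2-(1/6)*(r*W-3*lam*V)*(b*Pu)*W^2)) (at V)"
  unfolding g[symmetric] by (auto intro!: derivative_eq_intros d; simp add: field_simps power2_eq_square power3_eq_cube; algebra)

lemma chainB:
  assumes g: "ga x = V" "gb x = W" "gc x = Z" "\<rho> x = R" "\<pi> x = P"
    and d: "(ga has_real_derivative a1) (at x)" "(gb has_real_derivative a2) (at x)" "(gc has_real_derivative a3) (at x)"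
      "(\<rho> has_real_derivative Rd) (at x)" "(\<pi> has_real_derivative Pd) (at x)"
  shows "((\<lambda>s. \<rho> s * ((1/2)* s*(gc s)^2 - (1/6)* s*(c+b*\<pi> s)*(gb s)^2 - (1/3)*(s*gb s-3*lam*ga s)*(c+b*\<pi> s)*gb s)) has_real_derivative
     Rd*((1/2)*x*Z^2-(1/6)*x*(c+b*P)*W^2-(1/3)*(x*W-3*lam*V)*(c+b*P)*W)
     + R*((1/2)*Z^2+x*Z*a3-(1/6)*((c+b*P)*W^2+x*(b*Pd)*W^2+2*x*(c+b*P)*W*a2)
        -(1/3)*((W+x*a2-3*lam*a1)*(c+b*P)*W+(x*W-3*lam*V)*(b*Pd)*W+(x*W-3*lam*V)*(c+b*P)*a2))) (at x)"
  unfolding g[symmetric] by (auto intro!: derivative_eq_intros d; simp add: field_simps power2_eq_square power3_eq_cube; algebra)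

lemma chainC:
  assumes g: "ga x = V" "gb x = W" "gc x = Z"
    and d: "(ga has_real_derivative a1) (at x)" "(gb has_real_derivative a2) (at x)" "(gc has_real_derivative a3) (at x)"
  shows "((\<lambda>s. R * (r*gb s - lam*ga s) * gc s) has_real_derivative
     R*((r*a2-lam*a1)*Z+(r*W-lam*V)*a3)) (at x)"
  unfolding g[symmetric] by (auto intro!: derivative_eq_intros d; simp add: field_simps power2_eq_square power3_eq_cube; algebra)

lemma chainD:
  assumes g: "g x = Z" "\<rho> x = R" and d: "(g has_real_derivative a) (at x)" "(\<rho> has_real_derivative Rd) (at x)"
  shows "((\<lambda>s. \<rho> s * (g s)^2) has_real_derivative Rd*Z^2 + R*(2*Z*a)) (at x)"
  unfolding g[symmetric] by (auto intro!: derivative_eq_intros d; simp add: field_simps power2_eq_square power3_eq_cube; algebra)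

lemma chainT:
  assumes g: "ga x = V" "gb x = W" "gc x = Z" "\<pi> x = P"
    and d: "(ga has_real_derivative a1) (at x)" "(gb has_real_derivative a2) (at x)" "(gc has_real_derivative a3) (at x)"
      "(\<pi> has_real_derivative Pd) (at x)"
  shows "((\<lambda>s. R * ((r*gb s + n/3*ga s)*(gc s)^2/2 + b*\<pi> s*(r*(gb s)^3/6 + n/3*ga s*(gb s)^2/2))) has_real_derivative
     R*((r*a2+n/3*a1)*Z^2/2+(r*W+n/3*V)*(2*Z*a3)/2+b*Pd*(r*W^3/6+n/3*V*W^2/2)+b*P*(r*3*W^2*a2/6+n/3*(a1*W^2+V*2*W*a2)/2))) (at x)"
  unfolding g[symmetric] by (auto intro!: derivative_eq_intros d; simp add: field_simps power2_eq_square power3_eq_cube; algebra)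

lemma chainX:
  assumes g: "ga x = V" "gb x = W" "gc x = Z" "\<rho> x = R" "\<pi> x = P"
    and d: "(ga has_real_derivative a1) (at x)" "(gb has_real_derivative a2) (at x)" "(gc has_real_derivative a3) (at x)"
      "(\<rho> has_real_derivative Rd) (at x)" "(\<pi> has_real_derivative Pd) (at x)"
  shows "((\<lambda>s. -(\<rho> s * b * \<pi> s * gc s * (s*(gb s)^2/2 + n/3*ga s*gb s)) - s * \<rho> s * (gc s)^3/6) has_real_derivative
     (-(Rd*b*P*Z*(x*W^2/2+n/3*V*W)+R*b*Pd*Z*(x*W^2/2+n/3*V*W)+R*b*P*a3*(x*W^2/2+n/3*V*W)
        +R*b*P*Z*(W^2/2+x*2*W*a2/2+n/3*(a1*W+V*a2)))
      -(R*Z^3/6+x*Rd*Z^3/6+x*R*3*Z^2*a3/6))) (at x)"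
  unfolding g[symmetric] by (auto intro!: derivative_eq_intros d; simp add: field_simps power2_eq_square power3_eq_cube; algebra)



lemma powr_m1: "(x::real) > 0 \<Longrightarrow> x powr (a - 1) = x powr a / x"
  by (simp add: powr_diff)

lemma lagW:
  "((\<lambda>W. Lag b c p lam n s V W Z) has_real_derivative
     s powr (n-1) * ((1/2)* s*Z^2 - (1/6)* s*(c+b*V powr p)*W^2 - (1/3)*(s*W-3*lam*V)*(c+b*V powr p)*W)) (at W)"
  unfolding Lag_def
  by (auto intro!: derivative_eq_intros; simp add: field_simps power2_eq_square; algebra)

lemma lagZ:
  "((\<lambda>Z. Lag b c p lam n r V W Z) has_real_derivative r powr (n-1) * (r*W - lam*V) * Z) (at Z)"
  unfolding Lag_def
  by (auto intro!: derivative_eq_intros; simp add: field_simps power2_eq_square; algebra)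

lemma dpow: "x > 0 \<Longrightarrow> ((\<lambda>s. s powr a) has_real_derivative a*(x powr a/x)) (at x)"
  using has_real_derivative_powr[of x a] by (simp add: powr_m1)

lemma dfpow: "(g has_real_derivative D) (at x) \<Longrightarrow> g x > 0 \<Longrightarrow>
   ((\<lambda>s. g s powr a) has_real_derivative (a*(g x powr a/g x))*D) (at x)"
  using DERIV_fun_powr[of g D x a] by (simp add: powr_m1)

theorem part1:
  fixes b c p lam n :: real
  assumes "c * lam = 0" and "(1 + p / 3) * lam = 2 - n"
  shows "(\<forall>u. smooth_on (UNIV \<times> {0<..}) u \<and> (\<forall>t r. r > 0 \<longrightarrow> u t r > 0) \<longrightarrow>
           (\<forall>t r. r > 0 \<longrightarrow>
              r powr (n - 1) * (r * pr u t r - lam * u t r) * resA b c p n u t r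
              = - EL (Lag b c p lam n) u t r
                - (r * deriv (\<lambda>s. s powr (n - 1) * (pt u t s)^2) r
                   + (1 - (n + lam) / 2) * (r powr (n - 1) * (pt u t r)^2))))"
proof (intro allI impI)
  fix u t r
  assume H: "smooth_on (UNIV \<times> {0<..}) u \<and> (\<forall>t r. r > 0 \<longrightarrow> u t r > 0)" and r: "(0::real) < r"
  have sm: "smooth_on (UNIV \<times> {0<..}) u" using H by blast
  have U: "u t r > 0" using H r by blast
  have dif: "\<And>f. smooth_on (UNIV \<times> {0<..}) f \<Longrightarrow> case_prod f differentiable (at (t,r))"
    by (rule smooth_diff) (use r in auto)
  note d1 = partial_r[OF dif[OF sm]]
  note d2 = partial_r[OF dif[OF smooth_pr[OF sm]]]
  note d3 = partial_r[OF dif[OF smooth_pt[OF sm]]]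
  note e1 = partial_t[OF dif[OF sm]]
  note e2 = partial_t[OF dif[OF smooth_pr[OF sm]]]
  note e3 = partial_t[OF dif[OF smooth_pt[OF sm]]]
  have cl: "pt (pr u) t r = pr (pt u) t r" using clairaut[OF sm r] by simp
  note dR = dpow[OF r, of "n-1"]
  note dPr = dfpow[OF d1 U, of p]
  note dPU = dpow[OF U, of p]
  have FU: "deriv (\<lambda>V. Lag b c p lam n r V (pr u t r) (pt u t r)) (u t r) =
     r powr (n-1)*(-(lam/2)*(pt u t r)^2+(lam/2)*(c+b*u t r powr p)*(pr u t r)^2
       -(1/6)*(r*pr u t r-3*lam*u t r)*(b*(p*(u t r powr p/u t r)))*(pr u t r)^2)"
    unfolding Lag_def
    by (rule DERIV_imp_deriv, rule lagU_gen[where \<pi>="\<lambda>V. V powr p", OF refl dPU])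
  have iB: "(\<lambda>s. deriv (\<lambda>W. Lag b c p lam n s (u t s) W (pt u t s)) (pr u t s)) =
     (\<lambda>s. s powr (n-1) * ((1/2)* s*(pt u t s)^2 - (1/6)* s*(c+b*u t s powr p)*(pr u t s)^2
        - (1/3)*(s*pr u t s-3*lam*u t s)*(c+b*u t s powr p)*pr u t s))"
    by (rule ext, rule DERIV_imp_deriv, rule lagW)
  have DB: "deriv (\<lambda>s. deriv (\<lambda>W. Lag b c p lam n s (u t s) W (pt u t s)) (pr u t s)) r =
     ((n-1)*(r powr (n-1)/r))*((1/2)*r*(pt u t r)^2-(1/6)*r*(c+b*u t r powr p)*(pr u t r)^2-(1/3)*(r*pr u t r-3*lam*u t r)*(c+b*u t r powr p)*pr u t r)
     + r powr (n-1)*((1/2)*(pt u t r)^2+r*pt u t r*pr (pt u) t r-(1/6)*((c+b*u t r powr p)*(pr u t r)^2+r*(b*((p*(u t r powr p/u t r))*pr u t r))*(pr u t r)^2+2*r*(c+b*u t r powr p)*pr u t r*pr (pr u) t r)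
        -(1/3)*((pr u t r+r*pr (pr u) t r-3*lam*pr u t r)*(c+b*u t r powr p)*pr u t r+(r*pr u t r-3*lam*u t r)*(b*((p*(u t r powr p/u t r))*pr u t r))*pr u t r+(r*pr u t r-3*lam*u t r)*(c+b*u t r powr p)*pr (pr u) t r))"
    unfolding iB
    by (rule DERIV_imp_deriv, rule chainB[where ga="\<lambda>s. u t s" and gb="\<lambda>s. pr u t s" and gc="\<lambda>s. pt u t s"
          and \<rho>="\<lambda>s. s powr (n-1)" and \<pi>="\<lambda>s. u t s powr p" and x=r, OF refl refl refl refl refl d1 d2 d3 dR dPr])
  have iC: "(\<lambda>s. deriv (\<lambda>W. Lag b c p lam n r (u s r) (pr u s r) W) (pt u s r)) =
     (\<lambda>s. r powr (n-1) * (r*pr u s r - lam*u s r) * pt u s r)"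
    by (rule ext, rule DERIV_imp_deriv, rule lagZ)
  have DC: "deriv (\<lambda>s. deriv (\<lambda>W. Lag b c p lam n r (u s r) (pr u s r) W) (pt u s r)) t =
     r powr (n-1)*((r*pr (pt u) t r-lam*pt u t r)*pt u t r+(r*pr u t r-lam*u t r)*pt (pt u) t r)"
    unfolding iC cl[symmetric]
    by (rule DERIV_imp_deriv, rule chainC[where ga="\<lambda>s. u s r" and gb="\<lambda>s. pr u s r" and gc="\<lambda>s. pt u s r"
          and x=t, OF refl refl refl e1 e2 e3])
  have DD: "deriv (\<lambda>s. s powr (n - 1) * (pt u t s)^2) r = ((n-1)*(r powr (n-1)/r))*(pt u t r)^2 + r powr (n-1)*(2*pt u t r*pr (pt u) t r)"
    by (rule DERIV_imp_deriv, rule chainD[where g="\<lambda>s. pt u t s" and \<rho>="\<lambda>s. s powr (n-1)" and x=r, OF refl refl d3 dR])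
  have pm: "u t r powr (p - 1) = u t r powr p / u t r" using U by (rule powr_m1)
  show "r powr (n - 1) * (r * pr u t r - lam * u t r) * resA b c p n u t r
              = - EL (Lag b c p lam n) u t r
                - (r * deriv (\<lambda>s. s powr (n - 1) * (pt u t s)^2) r
                   + (1 - (n + lam) / 2) * (r powr (n - 1) * (pt u t r)^2))"
    unfolding EL_def resA_def FU DB DC DD pm
    by (rule alg1[OF r U assms refl refl])
qed

theorem part2:
  fixes b c p lam n :: real
  assumes n0: "n \<noteq> 0" and c0: "c = 0" and pn: "p = 6 * (1 - 3 / n)"
  shows "\<exists>T X :: real \<Rightarrow> real \<Rightarrow> real \<Rightarrow> real \<Rightarrow> real \<Rightarrow> real.
              \<forall>u. smooth_on (UNIV \<times> {0<..}) u \<and> (\<forall>t r. r > 0 \<longrightarrow> u t r > 0) \<longrightarrow>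
                (\<forall>t r. r > 0 \<longrightarrow>
                   (\<exists>DT DX.
                      ((\<lambda>s. T s r (u s r) (pr u s r) (pt u s r)) has_real_derivative DT) (at t)
                    \<and> ((\<lambda>s. X t s (u t s) (pr u t s) (pt u t s)) has_real_derivative DX) (at r)
                    \<and> DT + DX = r powr (n - 1) * pt u t r * (r * pr u t r + n / 3 * u t r)
                                * resA b c p n u t r))"
proof -
  have key: "\<exists>DT DX.
          ((\<lambda>s. r powr (n-1) * ((r*pr u s r + n/3*u s r)*(pt u s r)^2/2 + b*u s r powr p*(r*(pr u s r)^3/6 + n/3*u s r*(pr u s r)^2/2))) has_real_derivative DT) (at t)
        \<and> ((\<lambda>s. -(s powr (n-1) * b * u t s powr p * pt u t s * (s*(pr u t s)^2/2 + n/3*u t s*pr u t s)) - s * s powr (n-1) * (pt u t s)^3/6) has_real_derivative DX) (at r)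
        \<and> DT + DX = r powr (n - 1) * pt u t r * (r * pr u t r + n / 3 * u t r) * resA b c p n u t r"
    if H: "smooth_on (UNIV \<times> {0<..}) u \<and> (\<forall>t r. r > 0 \<longrightarrow> u t r > 0)" and r: "(0::real) < r" for u t r
  proof -
  have sm: "smooth_on (UNIV \<times> {0<..}) u" using H by blast
  have U: "u t r > 0" using H r by blast
  have dif: "\<And>f. smooth_on (UNIV \<times> {0<..}) f \<Longrightarrow> case_prod f differentiable (at (t,r))"
    by (rule smooth_diff) (use r in auto)
  note d1 = partial_r[OF dif[OF sm]]
  note d2 = partial_r[OF dif[OF smooth_pr[OF sm]]]
  note d3 = partial_r[OF dif[OF smooth_pt[OF sm]]]
  note e1 = partial_t[OF dif[OF sm]]
  note e2 = partial_t[OF dif[OF smooth_pr[OF sm]]]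
  note e3 = partial_t[OF dif[OF smooth_pt[OF sm]]]
  have cl: "pt (pr u) t r = pr (pt u) t r" using clairaut[OF sm r] by simp
  note dR = dpow[OF r, of "n-1"]
  note dPr = dfpow[OF d1 U, of p]
  note dPt = dfpow[OF e1 U, of p]
  note DT = chainT[where ga="\<lambda>s. u s r" and gb="\<lambda>s. pr u s r" and gc="\<lambda>s. pt u s r"
          and \<pi>="\<lambda>s. u s r powr p" and x=t and R="r powr (n-1)" and r=r and n=n and b=b, OF refl refl refl refl e1 e2 e3 dPt]
  note DX = chainX[where ga="\<lambda>s. u t s" and gb="\<lambda>s. pr u t s" and gc="\<lambda>s. pt u t s"
          and \<rho>="\<lambda>s. s powr (n-1)" and \<pi>="\<lambda>s. u t s powr p" and x=r and n=n and b=b, OF refl refl refl refl refl d1 d2 d3 dR dPr]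
  have pm: "u t r powr (p - 1) = u t r powr p / u t r" using U by (rule powr_m1)
  show ?thesis
    apply (intro exI conjI)
      apply (rule DT)
     apply (rule DX)
    unfolding resA_def pm c0 cl
    apply (rule alg2[OF r U n0 pn])
    apply (simp_all add: dpow)
    done
  qed
  show ?thesis
    apply (rule exI[where x="\<lambda>t r U W Z. r powr (n-1) * ((r*W + n/3*U)*Z^2/2 + b*U powr p*(r*W^3/6 + n/3*U*W^2/2))"])
    apply (rule exI[where x="\<lambda>t r U W Z. -(r powr (n-1) * b * U powr p * Z * (r*W^2/2 + n/3*U*W)) - r * r powr (n-1) * Z^3/6"])
    using key by auto
qed

theorem mainTheorem9:
  fixes a b c p lam n :: real
  assumes "3 * a = p * b" and "c * lam = 0" and "(1 + p / 3) * lam = 2 - n"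
  shows "(\<forall>u. smooth_on (UNIV \<times> {0<..}) u \<and> (\<forall>t r. r > 0 \<longrightarrow> u t r > 0) \<longrightarrow>
           (\<forall>t r. r > 0 \<longrightarrow>
              r powr (n - 1) * (r * pr u t r - lam * u t r) * resA b c p n u t r
              = - EL (Lag b c p lam n) u t r
                - (r * deriv (\<lambda>s. s powr (n - 1) * (pt u t s)^2) r
                   + (1 - (n + lam) / 2) * (r powr (n - 1) * (pt u t r)^2))))
       \<and> (c = 0 \<and> p = 6 * (1 - 3 / n) \<and> lam = - n / 3 \<longrightarrow>
           (\<exists>T X :: real \<Rightarrow> real \<Rightarrow> real \<Rightarrow> real \<Rightarrow> real \<Rightarrow> real.
              \<forall>u. smooth_on (UNIV \<times> {0<..}) u \<and> (\<forall>t r. r > 0 \<longrightarrow> u t r > 0) \<longrightarrow>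
                (\<forall>t r. r > 0 \<longrightarrow>
                   (\<exists>DT DX.
                      ((\<lambda>s. T s r (u s r) (pr u s r) (pt u s r)) has_real_derivative DT) (at t)
                    \<and> ((\<lambda>s. X t s (u t s) (pr u t s) (pt u t s)) has_real_derivative DX) (at r)
                    \<and> DT + DX = r powr (n - 1) * pt u t r * (r * pr u t r + n / 3 * u t r)
                                * resA b c p n u t r))))"
proof (intro conjI impI)
  show "\<forall>u. smooth_on (UNIV \<times> {0<..}) u \<and> (\<forall>t r. r > 0 \<longrightarrow> u t r > 0) \<longrightarrow>
           (\<forall>t r. r > 0 \<longrightarrow>
              r powr (n - 1) * (r * pr u t r - lam * u t r) * resA b c p n u t r
              = - EL (Lag b c p lam n) u t r
                - (r * deriv (\<lambda>s. s powr (n - 1) * (pt u t s)^2) r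
                   + (1 - (n + lam) / 2) * (r powr (n - 1) * (pt u t r)^2)))"
    by (rule part1[OF assms(2,3)])
next
  assume h: "c = 0 \<and> p = 6 * (1 - 3 / n) \<and> lam = - n / 3"
  have n0: "n \<noteq> 0"
  proof
    assume "n = 0"
    then show False using h assms(3) by simp
  qed
  show "\<exists>T X :: real \<Rightarrow> real \<Rightarrow> real \<Rightarrow> real \<Rightarrow> real \<Rightarrow> real.
              \<forall>u. smooth_on (UNIV \<times> {0<..}) u \<and> (\<forall>t r. r > 0 \<longrightarrow> u t r > 0) \<longrightarrow>
                (\<forall>t r. r > 0 \<longrightarrow>
                   (\<exists>DT DX.
                      ((\<lambda>s. T s r (u s r) (pr u s r) (pt u s r)) has_real_derivative DT) (at t)
                    \<and> ((\<lambda>s. X t s (u t s) (pr u t s) (pt u t s)) has_real_derivative DX) (at r)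
                    \<and> DT + DX = r powr (n - 1) * pt u t r * (r * pr u t r + n / 3 * u t r)
                                * resA b c p n u t r))"
    using part2[OF n0] h by blast
qed

end
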